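(* Let $n\geq 1$ and $\lambda>0$. The following are equivalent: (1) for every $\lambda$-concave body $K\subset\mathbb{R}^{n+1}$ and every triple $0\leq i<j<k\leq n+1$ one has $(k-j)\lambda^{-i}W_i(K)+(i-k)\lambda^{-j}W_j(K)+(j-i)\lambda^{-k}W_k(K)\geq 0$, with equality if and only if $K$ is a $\lambda$-sausage body; (2) for every $\lambda$-concave body $K\subset\mathbb{R}^{n+1}$ and every integer $l$ with $0\leq l\leq n-1$ one has $\lambda^{-l}W_l(K)-2\lambda^{-(l+1)}W_{l+1}(K)+\lambda^{-(l+2)}W_{l+2}(K)\geq 0$, with equality if and only if $K$ is a $\lambda$-sausage body.
   Context: A convex body is a compact convex set with non-empty interior; balls are closed. For $\lambda>0$, a convex body $K\subset\mathbb{R}^{n+1}$ is $\lambda$-concave if for every $p\in\partial K$ there is a ball of radius $1/\lambda$ whose boundary passes through $p$ and which, intersected with some open neighborhood $U(p)$ of $p$, is contained in $K\cap U(p)$. A $\lambda$-sausage body is the convex hull of two (possibly coinciding) balls of radius $1/\lambda$. The quermassintegrals $W_i(K)$ are defined by the Steiner formula $\mathrm{Vol}_{n+1}(K+tB)=\sum_{i=0}^{n+1}\binom{n+1}{i}W_i(K)t^i$, $t\geq0$, with $B$ the unit ball and $+$ Minkowski addition. *)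

theory Defs
  imports "HOL-Analysis.Analysis"
begin

definition convex_body :: "'a::euclidean_space set \<Rightarrow> bool" where
  "convex_body K \<longleftrightarrow> compact K \<and> convex K \<and> interior K \<noteq> {}"

definition lambda_concave :: "real \<Rightarrow> 'a::euclidean_space set \<Rightarrow> bool" where
  "lambda_concave lam K \<longleftrightarrow> convex_body K \<and>
     (\<forall>p\<in>frontier K. \<exists>c U. p \<in> sphere c (1 / lam) \<and> open U \<and> p \<in> U \<and>
        cball c (1 / lam) \<inter> U \<subseteq> K \<inter> U)"

definition lambda_sausage :: "real \<Rightarrow> 'a::euclidean_space set \<Rightarrow> bool" where
  "lambda_sausage lam K \<longleftrightarrow>
     (\<exists>a b. K = convex hull (cball a (1 / lam) \<union> cball b (1 / lam)))"

text \<open>Quermassintegrals via the Steiner formula in dimension DIM('a):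
  Vol(K + tB) = sum_{i=0}^{DIM('a)} (DIM('a) choose i) W_i(K) t^i for t \<ge> 0.\<close>
definition quermass :: "'a::euclidean_space set \<Rightarrow> nat \<Rightarrow> real" where
  "quermass K = (THE W. (\<forall>t\<ge>0. measure lebesgue {x + y | x y. x \<in> K \<and> y \<in> cball 0 t}
        = (\<Sum>i\<le>DIM('a). real (DIM('a) choose i) * W i * t ^ i))
      \<and> (\<forall>i>DIM('a). W i = 0))"

end

theory Submission
  imports Defs
begin

lemma convex_seq_bound:
  fixes a :: "nat \<Rightarrow> real"
  assumes ij: "i < j" and jk: "j < k"
    and d: "\<And>l. i \<le> l \<Longrightarrow> l + 2 \<le> k \<Longrightarrow> a l - 2 * a (l+1) + a (l+2) \<ge> 0"
  shows "(real k - real j) * a i + (real i - real k) * a j + (real j - real i) * a k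
         \<ge> (real k - real j) * (real j - real i) * (a (j-1) - 2 * a j + a (j+1))"
proof -
  define e where "e m = a (Suc m) - a m" for m
  have step: "e m \<le> e (Suc m)" if "i \<le> m" "m + 2 \<le> k" for m
    using d[OF that] unfolding e_def by (simp add: numeral_2_eq_2)
  have mono: "e m \<le> e m'" if "i \<le> m" "m \<le> m'" "m' < k" for m m'
    using that
  proof (induction m')
    case 0 then show ?case by simp
  next
    case (Suc m')
    show ?case
    proof (cases "m = Suc m'")
      case True then show ?thesis by simp
    next
      case False
      then have "m \<le> m'" using Suc.prems by simp
      then have "e m \<le> e m'" using Suc by simp
      also have "e m' \<le> e (Suc m')" using step[of m'] Suc.prems \<open>m \<le> m'\<close> by simp
      finally show ?thesis .
    qed
  qed
  have t1: "a j - a i = (\<Sum>m=i..<j. e m)"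
    unfolding e_def using sum_Suc_diff'[of i j a] ij by simp
  have t2: "a k - a j = (\<Sum>m=j..<k. e m)"
    unfolding e_def using sum_Suc_diff'[of j k a] jk by simp
  have s1: "(\<Sum>m=i..<j. e m) \<le> (\<Sum>m=i..<j. e (j-1))"
    by (rule sum_mono) (use mono jk in auto)
  have s2: "(\<Sum>m=j..<k. e j) \<le> (\<Sum>m=j..<k. e m)"
    by (rule sum_mono) (use mono jk ij in auto)
  have s1': "a j - a i \<le> (real j - real i) * e (j-1)"
    using s1 t1 ij by (simp add: of_nat_diff)
  have s2': "(real k - real j) * e j \<le> a k - a j"
    using s2 t2 jk by (simp add: of_nat_diff)
  have dj: "a (j-1) - 2 * a j + a (j+1) = e j - e (j-1)"
    unfolding e_def using ij by (cases j) auto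
  have kj: "real k - real j > 0" "real j - real i > 0" using ij jk by auto
  have "(real k - real j) * a i + (real i - real k) * a j + (real j - real i) * a k
      = (real j - real i) * (a k - a j) - (real k - real j) * (a j - a i)"
    by (simp add: algebra_simps)
  also have "\<dots> \<ge> (real j - real i) * ((real k - real j) * e j) - (real k - real j) * ((real j - real i) * e (j-1))"
    using mult_left_mono[OF s2', of "real j - real i"] mult_left_mono[OF s1', of "real k - real j"] kj
    by linarith
  finally show ?thesis unfolding dj by (simp add: algebra_simps)
qed

lemma convex_seq_nonneg:
  fixes a :: "nat \<Rightarrow> real"
  assumes ij: "i < j" and jk: "j < k"
    and d: "\<And>l. i \<le> l \<Longrightarrow> l + 2 \<le> k \<Longrightarrow> a l - 2 * a (l+1) + a (l+2) \<ge> 0"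
  shows "(real k - real j) * a i + (real i - real k) * a j + (real j - real i) * a k \<ge> 0"
proof -
  have "a (j-1) - 2 * a j + a (j+1) \<ge> 0" using d[of "j-1"] ij jk
    by (cases j) (auto simp: numeral_2_eq_2)
  moreover have "(real k - real j) * (real j - real i) \<ge> 0" using ij jk by auto
  ultimately show ?thesis using convex_seq_bound[OF ij jk d]
    by (meson mult_nonneg_nonneg order_trans)
qed

theorem lemma3p1:
  fixes n :: nat and lam :: real
  assumes "n \<ge> 1" and "DIM('a::euclidean_space) = n + 1" and "lam > 0"
  shows "(\<forall>(K::'a set) i j k. lambda_concave lam K \<and> i < j \<and> j < k \<and> k \<le> n + 1 \<longrightarrow>
            (let f = (real k - real j) * inverse lam ^ i * quermass K i
                   + (real i - real k) * inverse lam ^ j * quermass K j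
                   + (real j - real i) * inverse lam ^ k * quermass K k
             in f \<ge> 0 \<and> (f = 0 \<longleftrightarrow> lambda_sausage lam K)))
     \<longleftrightarrow>
         (\<forall>(K::'a set) l. lambda_concave lam K \<and> l \<le> n - 1 \<longrightarrow>
            (let f = inverse lam ^ l * quermass K l
                   - 2 * inverse lam ^ (l + 1) * quermass K (l + 1)
                   + inverse lam ^ (l + 2) * quermass K (l + 2)
             in f \<ge> 0 \<and> (f = 0 \<longleftrightarrow> lambda_sausage lam K)))" (is "?lhs \<longleftrightarrow> ?rhs")
proof
  assume H: ?lhs
  show ?rhs
  proof (intro allI impI)
    fix K :: "'a set" and l
    assume A: "lambda_concave lam K \<and> l \<le> n - 1"
    have "l + 2 \<le> n + 1" using A assms(1) by linarith
    then have "lambda_concave lam K \<and> l < l+1 \<and> l+1 < l+2 \<and> l+2 \<le> n + 1" using A by simp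
    from H[rule_format, OF this]
    show "let f = inverse lam ^ l * quermass K l
                   - 2 * inverse lam ^ (l + 1) * quermass K (l + 1)
                   + inverse lam ^ (l + 2) * quermass K (l + 2)
             in f \<ge> 0 \<and> (f = 0 \<longleftrightarrow> lambda_sausage lam K)"
      by (simp add: Let_def algebra_simps)
  qed
next
  assume H: ?rhs
  show ?lhs
  proof (intro allI impI)
    fix K :: "'a set" and i j k
    assume A: "lambda_concave lam K \<and> i < j \<and> j < k \<and> k \<le> n + 1"
    define a where "a m = inverse lam ^ m * quermass K m" for m
    have D: "a l - 2 * a (l+1) + a (l+2) \<ge> 0 \<and> (a l - 2 * a (l+1) + a (l+2) = 0 \<longleftrightarrow> lambda_sausage lam K)"
      if "l + 2 \<le> k" for l
    proof -
      have "lambda_concave lam K \<and> l \<le> n - 1" using A that by linarith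
      from H[rule_format, OF this] show ?thesis
        unfolding a_def by (simp add: Let_def algebra_simps)
    qed
    have ij: "i < j" and jk: "j < k" using A by auto
    define f where "f = (real k - real j) * a i + (real i - real k) * a j + (real j - real i) * a k"
    have f0: "f \<ge> 0" unfolding f_def by (rule convex_seq_nonneg[OF ij jk]) (use D in auto)
    have "f = 0 \<longleftrightarrow> lambda_sausage lam K"
    proof
      assume "f = 0"
      have b: "f \<ge> (real k - real j) * (real j - real i) * (a (j-1) - 2 * a j + a (j+1))"
        unfolding f_def by (rule convex_seq_bound[OF ij jk]) (use D in auto)
      have jj: "j - 1 + 2 \<le> k" "j - 1 + 1 = j" "j - 1 + 2 = j + 1" using ij jk by auto
      have dd: "a (j-1) - 2 * a j + a (j+1) \<ge> 0" using D[OF jj(1)] jj by simp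
      have pos: "(real k - real j) * (real j - real i) > 0" using ij jk by auto
      have "a (j-1) - 2 * a j + a (j+1) \<le> 0"
      proof (rule ccontr)
        assume "\<not> ?thesis"
        then have "(real k - real j) * (real j - real i) * (a (j-1) - 2 * a j + a (j+1)) > 0"
          using pos by simp
        then show False using b \<open>f = 0\<close> by simp
      qed
      then have "a (j-1) - 2 * a j + a (j+1) = 0" using dd by simp
      then show "lambda_sausage lam K" using D[OF jj(1)] jj by simp
    next
      assume S: "lambda_sausage lam K"
      have Z: "a l - 2 * a (l+1) + a (l+2) = 0" if "l + 2 \<le> k" for l using D[OF that] S by simp
      have "(real k - real j) * (\<lambda>m. - a m) i + (real i - real k) * (\<lambda>m. - a m) j
            + (real j - real i) * (\<lambda>m. - a m) k \<ge> 0"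
        by (rule convex_seq_nonneg[OF ij jk]) (use Z in force)
      then have "f \<le> 0" unfolding f_def by simp
      then show "f = 0" using f0 by simp
    qed
    with f0 show "let f = (real k - real j) * inverse lam ^ i * quermass K i
                   + (real i - real k) * inverse lam ^ j * quermass K j
                   + (real j - real i) * inverse lam ^ k * quermass K k
             in f \<ge> 0 \<and> (f = 0 \<longleftrightarrow> lambda_sausage lam K)"
      unfolding f_def a_def by (simp add: Let_def mult.assoc)
  qed
qed

end
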